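(* Suppose Assumptions A1, A2 (SDSD) and A3 hold for the steady state $(x^s,u^s)$ and discount factor $\gamma\in(0,1)$. Define $W(x):=V_\star^\gamma(x)+\lambda(x)$, where $\lambda$ and $\rho\in\mathcal{K}$ are the functions from Assumption A2. Then, for all $x_0\in\mathbb{X}_0$, $W$ is a Lyapunov function for the closed-loop system $x_{k+1}=f(x_k,\pi_\star^\gamma(x_k))$: (a) $W(x)\ge \rho(\|x-x^s\|)$; (b) there exists $\alpha\in\mathcal{K}$ with $W(x)\le \alpha(\|x-x^s\|)$; (c) $W(f(x,\pi_\star^\gamma(x)))-W(x)\le -\rho(\|x-x^s\|)$; and the closed-loop system under the optimal policy $\pi_\star^\gamma$ (equivalently, under an optimal policy of the modified problem with stage cost $\hat L^\gamma$) is asymptotically stable at $x^s$, i.e. there is $\beta\in\mathcal{KL}$ with $\|x_k^{\pi_\star^\gamma}-x^s\|\le\beta(\|x_0-x^s\|,k)$ for all $k\ge0$ and all $x_0\in\mathbb{X}_0$.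
   Context: Setting: discrete-time system $x_+=f(x,u)$ with $x\in\mathbb{R}^{n_x}$, $u\in\mathbb{R}^{n_u}$, stage cost $L(x,u)$, constraint set $\mathbb{Z}:=\{(x,u): h(x,u)\le 0\}$, with the convention $L(x,u)=\infty$ for $(x,u)\notin\mathbb{Z}$, and discount factor $\gamma\in(0,1)$. For a policy $\pi$ (a map $x\mapsto u$) the closed-loop trajectory is $x_{k+1}^\pi=f(x_k^\pi,\pi(x_k^\pi))$, $x_0^\pi=x_0$. $\mathbb{X}_0:=\{x_0:\exists\pi \text{ with } h(x_k^\pi,\pi(x_k^\pi))\le0\ \forall k\ge0\}$ and $\Pi:=\{\pi: h(x_k^\pi,\pi(x_k^\pi))\le 0\ \forall x_0\in\mathbb{X}_0,\forall k\ge 0\}$. The optimal value function is $V_\star^\gamma(x_0):=\min_{\pi\in\Pi}\sum_{k=0}^\infty\gamma^kL(x_k^\pi,\pi(x_k^\pi))$ and $\pi_\star^\gamma$ denotes an optimal policy; it satisfies the Bellman equation $V_\star^\gamma(x)=\min_{\pi\in\Pi}L(x,\pi(x))+\gamma V_\star^\gamma(f(x,\pi(x)))$. $(x^s,u^s)$ is a steady state, $x^s=f(x^s,u^s)$, normalized so that $L(x^s,u^s)=0$. Assumption A1: $\mathbb{Z}$ and $\mathbb{X}_0$ are compact and $|L(x,u)|<\infty$ for all $(x,u)\in\mathbb{Z}$. Assumption A2 (Strong Discounted Strict Dissipativity, SDSD): there exist a function $\lambda$, continuous at $x^s$, bounded on bounded sets, with $\lambda(x^s)=0$, and $\rho\in\mathcal{K}$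 such that for all $(x,u)\in\mathbb{Z}$: (i) $L(x,u)+\lambda(x)-\gamma\lambda(f(x,u))\ge\rho(\|x-x^s\|)$; (ii) $L(x,u)+\lambda(x)-\lambda(f(x,u))+(\gamma-1)V_\star^\gamma(f(x,u))\ge\rho(\|x-x^s\|)$. Assumption A3: $V_\star^\gamma$ is continuous at $x^s$ and bounded on $\mathbb{X}_0$. Modified cost: $\hat L^\gamma(x,u):=L(x,u)+\lambda(x)-\gamma\lambda(f(x,u))$; it is known (for bounded $\lambda$) that the discounted problem with stage cost $\hat L^\gamma$ has the same optimal policies as the original one and optimal value $V_\star^\gamma+\lambda$. Comparison functions: $\mathcal{K}$ = continuous, strictly increasing $\alpha:\mathbb{R}_{\ge0}\to\mathbb{R}_{\ge0}$ with $\alpha(0)=0$; $\mathcal{L}$ = continuous strictly decreasing functions tending to $0$; $\mathcal{KL}$ = continuous $\beta(s,t)$ with $\beta(\cdot,t)\in\mathcal{K}$ and $\beta(s,\cdot)\in\mathcal{L}$. *)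

theory Defs
  imports "HOL-Analysis.Analysis"
begin

definition class_K :: "(real \<Rightarrow> real) \<Rightarrow> bool" where
  "class_K \<alpha> \<longleftrightarrow> continuous_on {0..} \<alpha> \<and> strict_mono_on {0..} \<alpha> \<and> \<alpha> 0 = 0"

definition class_L :: "(real \<Rightarrow> real) \<Rightarrow> bool" where
  "class_L \<sigma> \<longleftrightarrow> continuous_on {0..} \<sigma>
      \<and> (\<forall>t1 t2. 0 \<le> t1 \<longrightarrow> t1 < t2 \<longrightarrow> \<sigma> t2 < \<sigma> t1)
      \<and> (\<sigma> \<longlongrightarrow> 0) at_top"

definition class_KL :: "(real \<Rightarrow> real \<Rightarrow> real) \<Rightarrow> bool" where
  "class_KL \<beta> \<longleftrightarrow> continuous_on ({0..} \<times> {0..}) (\<lambda>(s, t). \<beta> s t)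
      \<and> (\<forall>t\<ge>0. class_K (\<lambda>s. \<beta> s t))
      \<and> (\<forall>s>0. class_L (\<lambda>t. \<beta> s t))"

definition traj :: "('x \<Rightarrow> 'u \<Rightarrow> 'x) \<Rightarrow> ('x \<Rightarrow> 'u) \<Rightarrow> 'x \<Rightarrow> nat \<Rightarrow> 'x" where
  "traj f p x0 k = ((\<lambda>x. f x (p x)) ^^ k) x0"

definition Zset :: "('x \<Rightarrow> 'u \<Rightarrow> 'c::{ord,zero}) \<Rightarrow> ('x \<times> 'u) set" where
  "Zset h = {(x, u). h x u \<le> 0}"

definition feasible_from ::
  "('x \<Rightarrow> 'u \<Rightarrow> 'x) \<Rightarrow> ('x \<Rightarrow> 'u \<Rightarrow> 'c::{ord,zero}) \<Rightarrow> ('x \<Rightarrow> 'u) \<Rightarrow> 'x \<Rightarrow> bool" where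
  "feasible_from f h p x0 \<longleftrightarrow> (\<forall>k. h (traj f p x0 k) (p (traj f p x0 k)) \<le> 0)"

definition X0set :: "('x \<Rightarrow> 'u \<Rightarrow> 'x) \<Rightarrow> ('x \<Rightarrow> 'u \<Rightarrow> 'c::{ord,zero}) \<Rightarrow> 'x set" where
  "X0set f h = {x0. \<exists>p. feasible_from f h p x0}"

definition Pi_set :: "('x \<Rightarrow> 'u \<Rightarrow> 'x) \<Rightarrow> ('x \<Rightarrow> 'u \<Rightarrow> 'c::{ord,zero}) \<Rightarrow> ('x \<Rightarrow> 'u) set" where
  "Pi_set f h = {p. \<forall>x0 \<in> X0set f h. feasible_from f h p x0}"

definition cost_terms ::
  "real \<Rightarrow> ('x \<Rightarrow> 'u \<Rightarrow> real) \<Rightarrow> ('x \<Rightarrow> 'u \<Rightarrow> 'x) \<Rightarrow> ('x \<Rightarrow> 'u) \<Rightarrow> 'x \<Rightarrow> nat \<Rightarrow> real" where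
  "cost_terms \<gamma> L f p x0 k = \<gamma> ^ k * L (traj f p x0 k) (p (traj f p x0 k))"

definition cost ::
  "real \<Rightarrow> ('x \<Rightarrow> 'u \<Rightarrow> real) \<Rightarrow> ('x \<Rightarrow> 'u \<Rightarrow> 'x) \<Rightarrow> ('x \<Rightarrow> 'u) \<Rightarrow> 'x \<Rightarrow> real" where
  "cost \<gamma> L f p x0 = (\<Sum>k. cost_terms \<gamma> L f p x0 k)"

text \<open>Optimal value V_star^gamma(x0) for x0 in X0: infimum over admissible policies of the
  (finite) discounted cost; policies with divergent cost have cost +infinity and are ignored.\<close>
definition Vstar ::
  "real \<Rightarrow> ('x \<Rightarrow> 'u \<Rightarrow> real) \<Rightarrow> ('x \<Rightarrow> 'u \<Rightarrow> 'x) \<Rightarrow> ('x \<Rightarrow> 'u \<Rightarrow> 'c::{ord,zero}) \<Rightarrow> 'x \<Rightarrow> real" where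
  "Vstar \<gamma> L f h x0 =
     Inf {cost \<gamma> L f p x0 | p. p \<in> Pi_set f h \<and> summable (cost_terms \<gamma> L f p x0)}"

definition optimal_policy ::
  "real \<Rightarrow> ('x \<Rightarrow> 'u \<Rightarrow> real) \<Rightarrow> ('x \<Rightarrow> 'u \<Rightarrow> 'x) \<Rightarrow> ('x \<Rightarrow> 'u \<Rightarrow> 'c::{ord,zero}) \<Rightarrow> ('x \<Rightarrow> 'u) \<Rightarrow> bool" where
  "optimal_policy \<gamma> L f h p \<longleftrightarrow> p \<in> Pi_set f h \<and>
     (\<forall>x0 \<in> X0set f h. summable (cost_terms \<gamma> L f p x0) \<and>
        (\<forall>p' \<in> Pi_set f h. summable (cost_terms \<gamma> L f p' x0) \<longrightarrow>
            cost \<gamma> L f p x0 \<le> cost \<gamma> L f p' x0))"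

end

theory Submission
  imports Defs
begin

lemma K_majorant:
  fixes P :: "(real \<times> real) set" and M :: real
  assumes P: "\<And>u y. (u,y) \<in> P \<Longrightarrow> 0 \<le> u \<and> y \<le> M"
    and small: "\<And>\<epsilon>. \<epsilon> > 0 \<Longrightarrow> \<exists>\<delta>>0. \<forall>u y. (u,y) \<in> P \<longrightarrow> u < \<delta> \<longrightarrow> y \<le> \<epsilon>"
  shows "\<exists>\<alpha>. class_K \<alpha> \<and> (\<forall>u y. (u,y) \<in> P \<longrightarrow> y \<le> \<alpha> u)"
proof -
  define M' where "M' = max M 0"
  have M': "M \<le> M'" "0 \<le> M'" unfolding M'_def by auto
  define A where "A = {(a,b). 0 \<le> a \<and> 0 \<le> (b::real) \<and> (\<forall>u y. (u,y)\<in>P \<longrightarrow> y \<le> a + b*u)}"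
  define c where "c r = Inf ((\<lambda>(a,b). a + b*r) ` A)" for r
  have A0: "(M',0) \<in> A" using P M' unfolding A_def by fastforce
  have ne: "(\<lambda>(a,b). a + b*r) ` A \<noteq> {}" for r using A0 by blast
  have bdd: "bdd_below ((\<lambda>(a,b). a+b*r) ` A)" if "r \<ge> 0" for r
    unfolding bdd_below_def A_def using that by (auto intro!: exI[of _ 0])
  have c_le: "c r \<le> a + b*r" if "(a,b)\<in>A" "r \<ge> 0" for a b r
    unfolding c_def using cInf_lower[OF _ bdd[OF that(2)], of "a+b*r"] that by force
  have c_ge: "z \<le> c r" if "r \<ge> 0" "\<And>a b. (a,b)\<in>A \<Longrightarrow> z \<le> a + b*r" for z r
    unfolding c_def using that by (intro cInf_greatest[OF ne]) auto
  have c_nonneg: "0 \<le> c r" if "r \<ge> 0" for r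
    using that by (intro c_ge) (auto simp: A_def)
  have maj: "y \<le> c u" if "(u,y)\<in>P" for u y
    using that P by (intro c_ge) (auto simp: A_def)
  have mono: "c r \<le> c r'" if "0 \<le> r" "r \<le> r'" for r r'
  proof (rule c_ge)
    fix a b assume ab: "(a,b)\<in>A"
    hence "0 \<le> b" by (auto simp: A_def)
    hence "a + b*r \<le> a + b*r'" using that by (simp add: mult_left_mono)
    thus "c r \<le> a + b*r'" using c_le[OF ab that(1)] by linarith
  qed (use that in auto)
  have scale: "c r' * r / r' \<le> c r" if "0 < r" "r \<le> r'" for r r'
  proof (rule c_ge)
    fix a b assume ab: "(a,b)\<in>A"
    hence ab0: "0 \<le> a" "0 \<le> b" by (auto simp: A_def)
    have r'0: "0 < r'" using that by linarith
    have "c r' * r / r' \<le> (a + b*r') * r / r'"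
      using c_le[OF ab] that r'0 by (intro divide_right_mono mult_right_mono) auto
    also have "\<dots> = a * (r/r') + b*r" using r'0 by (simp add: field_simps)
    also have "\<dots> \<le> a + b*r"
    proof -
      have "r/r' \<le> 1" using that r'0 by simp
      from mult_left_le[OF this ab0(1)] show ?thesis by simp
    qed
    finally show "c r' * r / r' \<le> a + b*r" .
  qed (use that in auto)
  have small_a: "\<exists>b. (\<epsilon>, b) \<in> A" if eps: "\<epsilon> > 0" for \<epsilon>
  proof -
    obtain \<delta> where d: "\<delta> > 0" "\<forall>u y. (u,y) \<in> P \<longrightarrow> u < \<delta> \<longrightarrow> y \<le> \<epsilon>" using small[OF eps] by blast
    have "(\<epsilon>, M'/\<delta>) \<in> A" unfolding A_def
    proof (clarsimp, intro conjI allI impI)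
      show "0 \<le> \<epsilon>" using eps by simp
      show "0 \<le> M'/\<delta>" using M' d by simp
      fix u y assume uy: "(u,y) \<in> P"
      show "y \<le> \<epsilon> + M' * u / \<delta>"
      proof (cases "u < \<delta>")
        case True
        thus ?thesis using d uy P[OF uy] M' by (simp add: add_increasing2 divide_nonneg_pos)
      next
        case False
        hence "M' \<le> M' * u / \<delta>" using d M' by (simp add: le_divide_eq mult_left_mono)
        thus ?thesis using P[OF uy] M' eps by linarith
      qed
    qed
    thus ?thesis by blast
  qed
  have c0: "c 0 = 0"
  proof -
    have "c 0 \<le> \<epsilon>" if "\<epsilon> > 0" for \<epsilon> using small_a[OF that] c_le by fastforce
    hence "c 0 \<le> 0" by (meson dense not_le)
    thus ?thesis using c_nonneg[of 0] by simp
  qed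
  have cont0: "\<exists>d>0. \<forall>r. 0 \<le> r \<and> r < d \<longrightarrow> c r < \<epsilon>" if eps: "\<epsilon> > 0" for \<epsilon>
  proof -
    obtain b where b: "(\<epsilon>/2, b) \<in> A" using small_a[of "\<epsilon>/2"] eps by auto
    hence b0: "0 \<le> b" by (auto simp: A_def)
    have "c r < \<epsilon>" if "0 \<le> r" "r < \<epsilon>/(2*(b+1))" for r
    proof -
      have "b * r \<le> b * (\<epsilon>/(2*(b+1)))" using b0 that by (intro mult_left_mono) auto
      also have "\<dots> < \<epsilon>/2" using b0 \<open>\<epsilon>>0\<close> by (simp add: field_simps)
      finally show ?thesis using c_le[OF b that(1)] by linarith
    qed
    moreover have "\<epsilon>/(2*(b+1)) > 0" using b0 eps by simp
    ultimately show ?thesis by blast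
  qed
  have lip: "\<bar>c r' - c r\<bar> \<le> c r / r * \<bar>r' - r\<bar>" if "0 < r" "r/2 \<le> r'" for r r'
  proof (cases "r \<le> r'")
    case True
    have "c r' * r / r' \<le> c r" using scale[OF that(1) True] .
    hence "c r' * r \<le> c r * r'" using that True by (simp add: divide_le_eq mult.commute)
    hence "c r' \<le> c r * r' / r" using that by (simp add: le_divide_eq)
    moreover have "c r * r' / r - c r = c r / r * (r' - r)" using that by (simp add: field_simps)
    ultimately show ?thesis using mono[of r r'] that True by (simp add: abs_if)
  next
    case False
    have r'0: "0 < r'" using that by linarith
    have "c r * r' / r \<le> c r'" using scale[OF r'0] False by simp
    moreover have "c r - c r * r' / r = c r / r * (r - r')" using that by (simp add: field_simps)
    ultimately show ?thesis using mono[of r' r] r'0 False by (simp add: abs_if)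
  qed
  define \<alpha> where "\<alpha> r = r + c r" for r
  have contc: "continuous_on {0..} c"
    unfolding continuous_on_iff
  proof (intro ballI allI impI)
    fix x e :: real assume x: "x \<in> {0..}" and e: "e > 0"
    show "\<exists>d>0. \<forall>x'\<in>{0..}. dist x' x < d \<longrightarrow> dist (c x') (c x) < e"
    proof (cases "x = 0")
      case True
      then obtain d where "d > 0" "\<forall>r. 0 \<le> r \<and> r < d \<longrightarrow> c r < e" using cont0[OF e] by blast
      thus ?thesis using True c0 c_nonneg by (auto simp: dist_real_def intro!: exI[of _ d])
    next
      case False
      hence x0: "x > 0" using x by simp
      define K where "K = c x / x"
      have K0: "0 \<le> K" unfolding K_def using c_nonneg x0 by simp
      define d where "d = min (x/2) (e/(K+1))"
      have d0: "d > 0" unfolding d_def using x0 e K0 by simp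
      have "dist (c x') (c x) < e" if "x' \<in> {0..}" "dist x' x < d" for x'
      proof -
        have "\<bar>x' - x\<bar> < x/2" using that unfolding d_def dist_real_def by auto
        hence "x/2 \<le> x'" by (simp add: abs_if split: if_splits)
        hence "\<bar>c x' - c x\<bar> \<le> K * \<bar>x' - x\<bar>" using lip[OF x0] unfolding K_def by simp
        also have "\<dots> \<le> K * (e/(K+1))"
          using that K0 unfolding d_def dist_real_def by (intro mult_left_mono) auto
        also have "\<dots> < e" using K0 e by (simp add: field_simps)
        finally show ?thesis by (simp add: dist_real_def)
      qed
      thus ?thesis using d0 by blast
    qed
  qed
  have "class_K \<alpha>"
    unfolding class_K_def
  proof (intro conjI)
    show "continuous_on {0..} \<alpha>" unfolding \<alpha>_def by (intro continuous_intros contc)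
    show "strict_mono_on {0..} \<alpha>"
    proof (rule strict_mono_onI)
      fix r s :: real assume "r \<in> {0..}" "s \<in> {0..}" "r < s"
      thus "\<alpha> r < \<alpha> s" using mono[of r s] by (simp add: \<alpha>_def)
    qed
    show "\<alpha> 0 = 0" using c0 by (simp add: \<alpha>_def)
  qed
  moreover have "\<forall>u y. (u,y) \<in> P \<longrightarrow> y \<le> \<alpha> u" using maj P by (fastforce simp: \<alpha>_def)
  ultimately show ?thesis by blast
qed


lemma traj_0[simp]: "traj f p x 0 = x"
  by (simp add: traj_def)

lemma traj_Suc: "traj f p x (Suc k) = f (traj f p x k) (p (traj f p x k))"
  by (simp add: traj_def)

lemma traj_Suc': "traj f p x (Suc k) = traj f p (f x (p x)) k"
  by (simp add: traj_def funpow_Suc_right del: funpow.simps)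

lemma traj_add: "traj f p (traj f p x n) k = traj f p x (k + n)"
  by (simp add: traj_def funpow_add)

lemma feasible_traj: "feasible_from f h p x \<Longrightarrow> feasible_from f h p (traj f p x n)"
  unfolding feasible_from_def traj_add by blast

lemma traj_in_X0: "feasible_from f h p x \<Longrightarrow> traj f p x n \<in> X0set f h"
  unfolding X0set_def by (blast intro: feasible_traj)

lemma K_less: "class_K a \<Longrightarrow> 0 \<le> r \<Longrightarrow> r < s \<Longrightarrow> a r < a s"
  unfolding class_K_def by (auto intro: strict_mono_onD)

lemma K_mono: "class_K a \<Longrightarrow> 0 \<le> r \<Longrightarrow> r \<le> s \<Longrightarrow> a r \<le> a s"
  using K_less[of a r s] by (cases "r = s") auto

lemma K_nonneg: "class_K a \<Longrightarrow> 0 \<le> r \<Longrightarrow> 0 \<le> a r"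
  using K_mono[of a 0 r] unfolding class_K_def by auto

lemma K_pos: "class_K a \<Longrightarrow> 0 < r \<Longrightarrow> 0 < a r"
  using K_less[of a 0 r] unfolding class_K_def by auto

lemma K_small: assumes "class_K a" "0 < \<eta>" shows "\<exists>\<theta>>0. a \<theta> < \<eta>"
proof -
  have "continuous_on {0..} a" "a 0 = 0" using assms unfolding class_K_def by auto
  hence "\<forall>x\<in>{0..}. \<forall>e>0. \<exists>d>0. \<forall>x'\<in>{0..}. dist x' x < d \<longrightarrow> dist (a x') (a x) < e"
    unfolding continuous_on_iff by blast
  hence "\<exists>d>0. \<forall>x'\<in>{0..}. dist x' 0 < d \<longrightarrow> dist (a x') (a 0) < \<eta>"
    using assms(2) by (meson atLeast_iff order_refl)
  then obtain d where d: "d > 0" "\<forall>x'\<in>{0..}. dist x' 0 < d \<longrightarrow> dist (a x') (a 0) < \<eta>"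
    by blast
  hence "\<bar>a (d/2)\<bar> < \<eta>" using \<open>a 0 = 0\<close> by (simp add: dist_real_def)
  hence "a (d/2) < \<eta>" by linarith
  thus ?thesis using d by (intro exI[of _ "d/2"]) auto
qed

lemma KL_build:
  assumes G: "class_K G" and A: "class_K \<alpha>"
  shows "class_KL (\<lambda>s t. G (\<alpha> s / (t + 1)))"
proof -
  have Gc: "continuous_on {0..} G" and G0: "G 0 = 0" using G unfolding class_K_def by auto
  have Ac: "continuous_on {0..} \<alpha>" and A0: "\<alpha> 0 = 0" using A unfolding class_K_def by auto
  have inner: "continuous_on ({0..}\<times>{0..}) (\<lambda>p::real\<times>real. \<alpha> (fst p) / (snd p + 1))"
  proof (rule continuous_on_divide)
    show "continuous_on ({0..}\<times>{0..}) (\<lambda>p::real\<times>real. \<alpha> (fst p))"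
      by (rule continuous_on_compose2[OF Ac continuous_on_fst[OF continuous_on_id]]) auto
    show "continuous_on ({0..}\<times>{0..}) (\<lambda>p::real\<times>real. snd p + 1)"
      by (intro continuous_intros)
    show "\<forall>x\<in>{0..}\<times>{0..}. snd x + 1 \<noteq> (0::real)" by auto
  qed
  have c1: "continuous_on ({0..}\<times>{0..}) (\<lambda>p::real\<times>real. G (\<alpha> (fst p) / (snd p + 1)))"
    by (rule continuous_on_compose2[OF Gc inner]) (auto intro!: divide_nonneg_pos K_nonneg[OF A])
  have eqf: "(\<lambda>(s, t). G (\<alpha> s / (t + 1))) = (\<lambda>p::real\<times>real. G (\<alpha> (fst p) / (snd p + 1)))"
    by (auto simp: case_prod_beta)
  have K: "class_K (\<lambda>s. G (\<alpha> s / (t + 1)))" if t: "t \<ge> 0" for t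
    unfolding class_K_def
  proof (intro conjI)
    show "continuous_on {0..} (\<lambda>s. G (\<alpha> s / (t + 1)))"
      by (rule continuous_on_compose2[OF Gc continuous_on_divide[OF Ac continuous_on_const]])
         (use t in \<open>auto intro!: divide_nonneg_pos K_nonneg[OF A]\<close>)
    show "strict_mono_on {0..} (\<lambda>s. G (\<alpha> s / (t + 1)))"
    proof (rule strict_mono_onI)
      fix r s :: real assume "r \<in> {0..}" "s \<in> {0..}" "r < s"
      hence "\<alpha> r < \<alpha> s" "0 \<le> \<alpha> r" using K_less[OF A] K_nonneg[OF A] by auto
      hence "\<alpha> r / (t+1) < \<alpha> s / (t+1)" "0 \<le> \<alpha> r / (t+1)" using t by (auto intro: divide_strict_right_mono)
      thus "G (\<alpha> r / (t + 1)) < G (\<alpha> s / (t + 1))" using K_less[OF G] by blast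
    qed
    show "G (\<alpha> 0 / (t + 1)) = 0" using A0 G0 by simp
  qed
  have L: "class_L (\<lambda>t. G (\<alpha> s / (t + 1)))" if s: "s > 0" for s
    unfolding class_L_def
  proof (intro conjI allI impI)
    have as: "\<alpha> s > 0" using K_pos[OF A s] .
    show "continuous_on {0..} (\<lambda>t. G (\<alpha> s / (t + 1)))"
      by (rule continuous_on_compose2[OF Gc continuous_on_divide[OF continuous_on_const]])
         (use as in \<open>auto intro!: continuous_intros divide_nonneg_pos\<close>)
    fix t1 t2 :: real assume "0 \<le> t1" "t1 < t2"
    hence "\<alpha> s / (t2+1) < \<alpha> s / (t1+1)" "0 \<le> \<alpha> s / (t2+1)" using as
      by (auto intro!: divide_strict_left_mono divide_nonneg_pos)
    thus "G (\<alpha> s / (t2 + 1)) < G (\<alpha> s / (t1 + 1))" using K_less[OF G] by blast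
  next
    have as: "\<alpha> s > 0" using K_pos[OF A s] .
    have lim: "((\<lambda>t::real. \<alpha> s / (t + 1)) \<longlongrightarrow> 0) at_top"
    proof (rule tendsto_divide_0[OF tendsto_const])
      have "filterlim (\<lambda>t::real. t + 1) at_top at_top"
        using filterlim_tendsto_add_at_top[OF tendsto_const[of "1::real"] filterlim_ident]
        by (simp add: add.commute)
      thus "filterlim (\<lambda>t::real. t + 1) at_infinity at_top"
        by (rule filterlim_at_top_imp_at_infinity)
    qed
    have ev: "\<forall>\<^sub>F t in at_top. \<alpha> s / (t + 1) \<in> {0..}"
      by (rule eventually_mono[OF eventually_ge_at_top[of "0::real"]]) (use as in \<open>auto intro!: divide_nonneg_pos\<close>)
    show "((\<lambda>t. G (\<alpha> s / (t + 1))) \<longlongrightarrow> 0) at_top"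
      using continuous_on_tendsto_compose[OF Gc lim _ ev] G0 by simp
  qed
  show ?thesis unfolding class_KL_def eqf using c1 K L by blast
qed


theorem theorem2:
  fixes f :: "'x::euclidean_space \<Rightarrow> 'u::euclidean_space \<Rightarrow> 'x"
    and h :: "'x \<Rightarrow> 'u \<Rightarrow> 'c::{ord,zero}"
    and L :: "'x \<Rightarrow> 'u \<Rightarrow> real"
    and \<gamma> :: real
    and xs :: 'x and us :: 'u
    and lam :: "'x \<Rightarrow> real"
    and \<rho> :: "real \<Rightarrow> real"
    and pistar :: "'x \<Rightarrow> 'u"
  assumes gamma: "0 < \<gamma>" "\<gamma> < 1"
    and steady: "f xs us = xs" "L xs us = 0" "h xs us \<le> 0"
    and A1: "compact (Zset h)" "compact (X0set f h)"
    and A2_lam: "isCont lam xs" "\<And>S. bounded S \<Longrightarrow> bounded (lam ` S)" "lam xs = 0"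
    and A2_rho: "class_K \<rho>"
    and A2_i: "\<And>x u. (x, u) \<in> Zset h \<Longrightarrow>
                 L x u + lam x - \<gamma> * lam (f x u) \<ge> \<rho> (norm (x - xs))"
    and A2_ii: "\<And>x u. (x, u) \<in> Zset h \<Longrightarrow> f x u \<in> X0set f h \<Longrightarrow>
                 L x u + lam x - lam (f x u) + (\<gamma> - 1) * Vstar \<gamma> L f h (f x u)
                   \<ge> \<rho> (norm (x - xs))"
    and A3: "continuous (at xs within X0set f h) (Vstar \<gamma> L f h)"
            "bounded (Vstar \<gamma> L f h ` X0set f h)"
    and opt: "optimal_policy \<gamma> L f h pistar"
  shows "(\<forall>x \<in> X0set f h. Vstar \<gamma> L f h x + lam x \<ge> \<rho> (norm (x - xs)))
       \<and> (\<exists>\<alpha>. class_K \<alpha> \<and>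
            (\<forall>x \<in> X0set f h. Vstar \<gamma> L f h x + lam x \<le> \<alpha> (norm (x - xs))))
       \<and> (\<forall>x \<in> X0set f h.
            (Vstar \<gamma> L f h (f x (pistar x)) + lam (f x (pistar x)))
              - (Vstar \<gamma> L f h x + lam x) \<le> - \<rho> (norm (x - xs)))
       \<and> (\<exists>\<beta>. class_KL \<beta> \<and>
            (\<forall>x0 \<in> X0set f h. \<forall>k::nat.
               norm (traj f pistar x0 k - xs) \<le> \<beta> (norm (x0 - xs)) (real k)))"
  proof -
  define X0 where "X0 = X0set f h"
  define V where "V = Vstar \<gamma> L f h"
  have pi: "pistar \<in> Pi_set f h" and optX: "\<And>x0. x0 \<in> X0 \<Longrightarrow> summable (cost_terms \<gamma> L f pistar x0) \<and>
        (\<forall>p' \<in> Pi_set f h. summable (cost_terms \<gamma> L f p' x0) \<longrightarrow>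
            cost \<gamma> L f pistar x0 \<le> cost \<gamma> L f p' x0)"
    using opt unfolding optimal_policy_def X0_def by auto
  have feasX0: "feasible_from f h pistar x" if "x \<in> X0" for x
    using pi that unfolding Pi_set_def X0_def by auto
  have trajX0: "traj f pistar x k \<in> X0" if "x \<in> X0" for x k
    using traj_in_X0[OF feasX0[OF that]] unfolding X0_def .
  have Xstep: "f x (pistar x) \<in> X0" if "x \<in> X0" for x
    using trajX0[OF that, of 1] by (simp add: traj_Suc)
  have Zmem: "(x, pistar x) \<in> Zset h" if "x \<in> X0" for x
    using feasX0[OF that] unfolding feasible_from_def Zset_def by (auto dest: spec[of _ 0])
  have rho0: "0 \<le> \<rho> r" if "0 \<le> r" for r using K_nonneg[OF A2_rho that] .
  have bX0: "bounded X0" using A1(2) compact_imp_bounded unfolding X0_def by blast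
  obtain B where B: "\<And>x. x \<in> X0 \<Longrightarrow> \<bar>lam x\<bar> \<le> B"
    using A2_lam(2)[OF bX0] unfolding bounded_real by blast
  obtain BV where BV: "\<And>x. x \<in> X0 \<Longrightarrow> \<bar>V x\<bar> \<le> BV"
    using A3(2) unfolding bounded_real V_def X0_def by blast
  have cost_lower: "\<rho> (norm (x0 - xs)) \<le> cost \<gamma> L f p x0 + lam x0"
    if x0: "x0 \<in> X0" and p: "p \<in> Pi_set f h" and sm: "summable (cost_terms \<gamma> L f p x0)" for x0 p
  proof -
    define z where "z k = traj f p x0 k" for k
    have feas: "feasible_from f h p x0" using p x0 unfolding Pi_set_def X0_def by auto
    have zX: "z k \<in> X0" for k unfolding z_def X0_def using traj_in_X0[OF feas] .
    have zZ: "(z k, p (z k)) \<in> Zset h" for k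
      using feas unfolding feasible_from_def Zset_def z_def by auto
    define Lh where "Lh k = L (z k) (p (z k)) + lam (z k) - \<gamma> * lam (z (Suc k))" for k
    have Lh: "\<rho> (norm (z k - xs)) \<le> Lh k" for k
      using A2_i[OF zZ[of k]] unfolding Lh_def z_def traj_Suc by simp
    have Lh0: "0 \<le> Lh k" for k using Lh[of k] rho0[of "norm (z k - xs)"] by simp
    have tele: "(\<Sum>k<N. \<gamma>^k * Lh k) = (\<Sum>k<N. cost_terms \<gamma> L f p x0 k) + lam x0 - \<gamma>^N * lam (z N)" for N
    proof (induction N)
      case 0 thus ?case by (simp add: z_def)
    next
      case (Suc N) thus ?case by (simp add: Lh_def cost_terms_def z_def algebra_simps)
    qed
    have t1: "(\<lambda>N. \<gamma>^N * lam (z N)) \<longlonglongrightarrow> 0"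
    proof (rule Lim_null_comparison)
      show "\<forall>\<^sub>F N in sequentially. norm (\<gamma>^N * lam (z N)) \<le> \<gamma>^N * B"
        using B[OF zX] gamma by (auto simp: abs_mult intro!: mult_left_mono)
      show "(\<lambda>N. \<gamma>^N * B) \<longlonglongrightarrow> 0" using gamma by (intro tendsto_mult_left_zero LIMSEQ_power_zero) auto
    qed
    have "(\<lambda>N. (\<Sum>k<N. cost_terms \<gamma> L f p x0 k) + lam x0 - \<gamma>^N * lam (z N))
            \<longlonglongrightarrow> cost \<gamma> L f p x0 + lam x0 - 0"
      unfolding cost_def by (intro tendsto_intros summable_LIMSEQ sm t1)
    hence lim: "(\<lambda>N. \<Sum>k<N. \<gamma>^k * Lh k) \<longlonglongrightarrow> cost \<gamma> L f p x0 + lam x0"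
      unfolding tele by simp
    show ?thesis
    proof (rule LIMSEQ_le_const[OF lim], intro exI allI impI)
      fix N :: nat assume "1 \<le> N"
      have "\<rho> (norm (x0 - xs)) \<le> \<gamma>^0 * Lh 0" using Lh[of 0] by (simp add: z_def)
      also have "\<dots> \<le> (\<Sum>k<N. \<gamma>^k * Lh k)"
        by (rule member_le_sum) (use \<open>1 \<le> N\<close> Lh0 gamma in auto)
      finally show "\<rho> (norm (x0 - xs)) \<le> (\<Sum>k<N. \<gamma>^k * Lh k)" .
    qed
  qed
  have Veq: "V x = cost \<gamma> L f pistar x" if "x \<in> X0" for x
    unfolding V_def Vstar_def
    by (rule cInf_eq_minimum) (use optX[OF that] pi in auto)
  have PA: "\<rho> (norm (x - xs)) \<le> V x + lam x" if "x \<in> X0" for x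
    using cost_lower[OF that pi] optX[OF that] Veq[OF that] by simp
  have Bell: "cost \<gamma> L f pistar x = L x (pistar x) + \<gamma> * cost \<gamma> L f pistar (f x (pistar x))"
    if x: "x \<in> X0" for x
  proof -
    have sm: "summable (cost_terms \<gamma> L f pistar x)" using optX[OF x] by simp
    have sm1: "summable (cost_terms \<gamma> L f pistar (f x (pistar x)))" using optX[OF Xstep[OF x]] by simp
    have sh: "cost_terms \<gamma> L f pistar x (Suc k) = \<gamma> * cost_terms \<gamma> L f pistar (f x (pistar x)) k" for k
      unfolding cost_terms_def traj_Suc'[of f pistar x k] by simp
    have "(\<Sum>n. cost_terms \<gamma> L f pistar x (Suc n)) = cost \<gamma> L f pistar x - cost_terms \<gamma> L f pistar x 0"
      unfolding cost_def by (rule suminf_split_head[OF sm])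
    moreover have "(\<Sum>n. cost_terms \<gamma> L f pistar x (Suc n)) = \<gamma> * cost \<gamma> L f pistar (f x (pistar x))"
      unfolding sh cost_def by (rule suminf_mult[OF sm1])
    ultimately show ?thesis by (simp add: cost_terms_def)
  qed
  have PC: "(V (f x (pistar x)) + lam (f x (pistar x))) - (V x + lam x) \<le> - \<rho> (norm (x - xs))"
    if x: "x \<in> X0" for x
  proof -
    have "\<rho> (norm (x - xs)) \<le> L x (pistar x) + lam x - lam (f x (pistar x)) + (\<gamma> - 1) * V (f x (pistar x))"
      using A2_ii[OF Zmem[OF x]] Xstep[OF x] unfolding V_def X0_def by simp
    moreover have "V x = L x (pistar x) + \<gamma> * V (f x (pistar x))"
      using Veq[OF x] Veq[OF Xstep[OF x]] Bell[OF x] by simp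
    ultimately show ?thesis by (simp add: algebra_simps)
  qed
  have xsX0: "xs \<in> X0"
  proof -
    have "traj f (\<lambda>_. us) xs k = xs" for k by (induction k) (simp_all add: traj_Suc steady)
    hence "feasible_from f h (\<lambda>_. us) xs" unfolding feasible_from_def using steady by simp
    thus ?thesis unfolding X0_def X0set_def by blast
  qed
  define p' where "p' x = (if x = xs then us else pistar x)" for x
  have p'step: "h x (p' x) \<le> 0 \<and> f x (p' x) \<in> X0" if "x \<in> X0" for x
  proof (cases "x = xs")
    case True thus ?thesis using steady xsX0 by (simp add: p'_def)
  next
    case False
    have "h x (pistar x) \<le> 0" using feasX0[OF that] unfolding feasible_from_def by (auto dest: spec[of _ 0])
    thus ?thesis using False Xstep[OF that] by (simp add: p'_def)
  qed
  have p'traj: "traj f p' x k \<in> X0" if "x \<in> X0" for x k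
    by (induction k) (use that p'step in \<open>auto simp: traj_Suc\<close>)
  have p'Pi: "p' \<in> Pi_set f h"
    unfolding Pi_set_def feasible_from_def using p'traj p'step unfolding X0_def by blast
  have p'xs: "traj f p' xs k = xs" for k by (induction k) (simp_all add: traj_Suc steady p'_def)
  have p'cost: "cost_terms \<gamma> L f p' xs = (\<lambda>_. 0)"
    by (rule ext) (simp add: cost_terms_def p'xs p'_def steady)
  have Vxs: "V xs = 0"
  proof -
    have "V xs \<le> cost \<gamma> L f p' xs" using optX[OF xsX0] p'Pi p'cost Veq[OF xsX0] by simp
    also have "\<dots> = 0" unfolding cost_def p'cost by simp
    finally have "V xs \<le> 0" .
    moreover have "0 \<le> V xs" using PA[OF xsX0] A2_lam(3) A2_rho unfolding class_K_def by simp
    ultimately show ?thesis by simp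
  qed
  define W where "W x = V x + lam x" for x
  have Wcont: "continuous (at xs within X0) W"
    unfolding W_def V_def X0_def
    by (rule continuous_add[OF A3(1) continuous_at_imp_continuous_within[OF A2_lam(1)]])
  have PB: "\<exists>\<alpha>. class_K \<alpha> \<and> (\<forall>x \<in> X0. W x \<le> \<alpha> (norm (x - xs)))"
  proof -
    have "\<exists>\<alpha>. class_K \<alpha> \<and> (\<forall>u y. (u,y) \<in> {(norm (x - xs), W x) | x. x \<in> X0} \<longrightarrow> y \<le> \<alpha> u)"
    proof (rule K_majorant[where M = "BV + B"])
      fix u y assume "(u,y) \<in> {(norm (x - xs), W x) | x. x \<in> X0}"
      then obtain x where x: "x \<in> X0" "u = norm (x - xs)" "y = W x" by blast
      have "V x \<le> BV" "lam x \<le> B" using BV[OF x(1)] B[OF x(1)] by auto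
      thus "0 \<le> u \<and> y \<le> BV + B" using x unfolding W_def by simp
    next
      fix \<epsilon> :: real assume "\<epsilon> > 0"
      then obtain d where d: "d > 0" "\<forall>x'\<in>X0. dist x' xs < d \<longrightarrow> dist (W x') (W xs) < \<epsilon>"
        using Wcont unfolding continuous_within_eps_delta by blast
      have Wxs: "W xs = 0" using Vxs A2_lam(3) by (simp add: W_def)
      show "\<exists>\<delta>>0. \<forall>u y. (u,y) \<in> {(norm (x - xs), W x) | x. x \<in> X0} \<longrightarrow> u < \<delta> \<longrightarrow> y \<le> \<epsilon>"
      proof (intro exI[of _ d] conjI allI impI)
        show "d > 0" using d by simp
        fix u y assume mem: "(u,y) \<in> {(norm (x - xs), W x) | x. x \<in> X0}" and ud: "u < d"
        then obtain x where x: "x\<in>X0" "u = norm (x - xs)" "y = W x" by blast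
        have "dist x xs < d" using x ud by (simp add: dist_norm)
        hence "dist (W x) (W xs) < \<epsilon>" using d(2) x(1) by blast
        thus "y \<le> \<epsilon>" using Wxs x by (simp add: dist_real_def)
      qed
    qed
    thus ?thesis by blast
  qed
  obtain \<alpha> where \<alpha>: "class_K \<alpha>" "\<And>x. x \<in> X0 \<Longrightarrow> W x \<le> \<alpha> (norm (x - xs))" using PB by blast
  have PD: "\<exists>\<beta>. class_KL \<beta> \<and> (\<forall>x0 \<in> X0. \<forall>k::nat. norm (traj f pistar x0 k - xs) \<le> \<beta> (norm (x0 - xs)) (real k))"
  proof -
    obtain R0 where R0: "\<And>x. x \<in> X0 \<Longrightarrow> norm x \<le> R0" using bX0 unfolding bounded_iff by blast
    define e where "e x0 k = norm (traj f pistar x0 k - xs)" for x0 k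
    define w where "w x0 k = W (traj f pistar x0 k)" for x0 k
    have eR: "e x0 k \<le> R0 + norm xs" if "x0 \<in> X0" for x0 k
      using R0[OF trajX0[OF that, of k]] norm_triangle_ineq4[of "traj f pistar x0 k" xs]
      unfolding e_def by linarith
    have wstep: "w x0 (Suc j) \<le> w x0 j - \<rho> (e x0 j)" if "x0 \<in> X0" for x0 j
      using PC[OF trajX0[OF that, of j]] unfolding w_def e_def W_def traj_Suc by simp
    have wlow: "\<rho> (e x0 j) \<le> w x0 j" if "x0 \<in> X0" for x0 j
      using PA[OF trajX0[OF that, of j]] unfolding w_def e_def W_def by simp
    have wup: "w x0 j \<le> \<alpha> (e x0 j)" if "x0 \<in> X0" for x0 j
      using \<alpha>(2)[OF trajX0[OF that, of j]] unfolding w_def e_def by simp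
    have rhoe: "0 \<le> \<rho> (e x0 j)" for x0 j using rho0[of "e x0 j"] unfolding e_def by simp
    have wsum: "w x0 n + (\<Sum>j<n. \<rho> (e x0 j)) \<le> w x0 0" if "x0 \<in> X0" for x0 n
    proof (induction n)
      case 0 thus ?case by simp
    next
      case (Suc n) thus ?case using wstep[OF that, of n] by simp
    qed
    have wmono: "w x0 (j + d) \<le> w x0 j" if "x0 \<in> X0" for x0 j d
    proof (induction d)
      case 0 thus ?case by simp
    next
      case (Suc d) thus ?case using wstep[OF that, of "j + d"] rhoe[of x0 "j+d"] by simp
    qed
    have key: "\<exists>\<delta>>0. \<forall>u y. (u,y) \<in> {(\<alpha> (norm (x0 - xs)) / (real k + 1), e x0 k) | x0 k. x0 \<in> X0}
                 \<longrightarrow> u < \<delta> \<longrightarrow> y \<le> \<epsilon>" if eps: "\<epsilon> > 0" for \<epsilon>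
    proof -
      have eta: "\<rho> \<epsilon> > 0" using K_pos[OF A2_rho eps] .
      obtain \<theta> where th: "\<theta> > 0" "\<alpha> \<theta> < \<rho> \<epsilon>" using K_small[OF \<alpha>(1) eta] by blast
      define \<mu> where "\<mu> = \<rho> \<theta>"
      have mu: "\<mu> > 0" unfolding \<mu>_def using K_pos[OF A2_rho th(1)] .
      have main: "e x0 k \<le> \<epsilon>" if x0: "x0 \<in> X0" and lt: "\<alpha> (norm (x0 - xs)) / (real k + 1) < \<mu>" for x0 k
      proof (rule ccontr)
        assume "\<not> e x0 k \<le> \<epsilon>"
        hence "\<rho> \<epsilon> < \<rho> (e x0 k)" using K_less[OF A2_rho, of \<epsilon> "e x0 k"] eps by simp
        hence wk: "\<rho> \<epsilon> < w x0 k" using wlow[OF x0, of k] by linarith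
        have each: "\<mu> \<le> \<rho> (e x0 j)" if j: "j \<in> {..<Suc k}" for j
        proof -
          have "w x0 (j + (k - j)) \<le> w x0 j" by (rule wmono[OF x0])
          hence "w x0 k \<le> w x0 j" using j by simp
          hence ej: "\<rho> \<epsilon> < \<alpha> (e x0 j)" using wk wup[OF x0, of j] by linarith
          have "\<theta> < e x0 j"
          proof (rule ccontr)
            assume "\<not> \<theta> < e x0 j"
            hence "\<alpha> (e x0 j) \<le> \<alpha> \<theta>" using K_mono[OF \<alpha>(1), of "e x0 j" \<theta>] unfolding e_def by simp
            thus False using ej th by linarith
          qed
          thus ?thesis unfolding \<mu>_def using K_less[OF A2_rho, of \<theta> "e x0 j"] th by simp
        qed
        have "(\<Sum>j<Suc k. \<mu>) \<le> (\<Sum>j<Suc k. \<rho> (e x0 j))" by (rule sum_mono) (rule each)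
        also have "\<dots> \<le> w x0 0" using wsum[OF x0, of "Suc k"] wlow[OF x0, of "Suc k"] rhoe[of x0 "Suc k"] by linarith
        also have "\<dots> \<le> \<alpha> (norm (x0 - xs))" using \<alpha>(2)[OF x0] unfolding w_def by simp
        finally have "(real k + 1) * \<mu> \<le> \<alpha> (norm (x0 - xs))" by (simp add: add.commute)
        hence "\<mu> \<le> \<alpha> (norm (x0 - xs)) / (real k + 1)" by (simp add: le_divide_eq mult.commute)
        thus False using lt by linarith
      qed
      show ?thesis using mu main by blast
    qed
    obtain G where G: "class_K G" "\<forall>u y. (u,y) \<in> {(\<alpha> (norm (x0 - xs)) / (real k + 1), e x0 k) | x0 k. x0 \<in> X0} \<longrightarrow> y \<le> G u"
    proof -
      have "\<exists>G. class_K G \<and> (\<forall>u y. (u,y) \<in> {(\<alpha> (norm (x0 - xs)) / (real k + 1), e x0 k) | x0 k. x0 \<in> X0} \<longrightarrow> y \<le> G u)"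
      proof (rule K_majorant[where M = "R0 + norm xs"])
        fix u y assume "(u,y) \<in> {(\<alpha> (norm (x0 - xs)) / (real k + 1), e x0 k) | x0 k. x0 \<in> X0}"
        then obtain x0 k where x: "x0 \<in> X0" "u = \<alpha> (norm (x0 - xs)) / (real k + 1)" "y = e x0 k" by blast
        have "0 \<le> \<alpha> (norm (x0 - xs))" using K_nonneg[OF \<alpha>(1)] by simp
        thus "0 \<le> u \<and> y \<le> R0 + norm xs" using x eR[OF x(1)] by simp
      next
        fix \<epsilon> :: real assume "\<epsilon> > 0" thus "\<exists>\<delta>>0. \<forall>u y. (u,y) \<in> {(\<alpha> (norm (x0 - xs)) / (real k + 1), e x0 k) | x0 k. x0 \<in> X0}
                 \<longrightarrow> u < \<delta> \<longrightarrow> y \<le> \<epsilon>" by (rule key)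
      qed
      thus ?thesis using that by blast
    qed
    have bound: "norm (traj f pistar x0 k - xs) \<le> G (\<alpha> (norm (x0 - xs)) / (real k + 1))" if "x0 \<in> X0" for x0 k
      using G(2) that unfolding e_def by blast
    show ?thesis
      by (rule exI[of _ "\<lambda>s t. G (\<alpha> s / (t + 1))"]) (use KL_build[OF G(1) \<alpha>(1)] bound in auto)
  qed
  show ?thesis
    using PA PC PB PD unfolding W_def V_def X0_def by blast
qed

end
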